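(* Let $G=(V,E,\omega)\in\mathcal G$, $\gamma\geq0$, and $\tau>0$. If $S^0\subset V$ and $\{S^k\}_{k=1}^N$ ($N\in\mathbb N\cup\{\infty\}$) is a sequence generated by the OKMBO scheme, then there is $K\geq0$ such that $S^k=S^K$ for all $k\geq K$.
   Context: $\mathcal{G}$ is the set of finite, simple, connected, undirected, edge-weighted graphs $G=(V,E,\omega)$ with $V=\{1,\dots,n\}$, $n\geq2$, weights $\omega_{ij}=\omega_{ji}>0$ on edges, $0$ otherwise. $d_i=\sum_j\omega_{ij}$. $\mathcal V$: functions $V\to\mathbb R$. Fixed $r\in[0,1]$: $(\Delta u)_i=d_i^{-r}\sum_j\omega_{ij}(u_i-u_j)$, $\mathcal M(u)=\sum_id_i^ru_i$, $\mathcal A(u)=\frac{\mathcal M(u)}{\sum_id_i^r}\chi_V$ ($\chi_S$ indicator of $S$). For $u\in\mathcal V$ let $\varphi$ be the unique solution of $\Delta\varphi=u-\mathcal A(u)$, $\mathcal M(\varphi)=0$, and $Lu:=\Delta u+\gamma\varphi$. OKMBO scheme: given $S^0\subset V$, for $k=1,\dots,N$ let $u=e^{-\tau L}\chi_{S^{k-1}}$ (the time-$\tau$ solution of $du/dt=-Lu$, $u(0)=\chi_{S^{k-1}}$) and $S^k=\{i\in V:u_i\geq\frac12\}$. *)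

theory Defs
  imports Complex_Main "HOL-Library.Extended_Nat"
begin

text \<open>Vertex set V = {1..n}; weights w :: nat => nat => real (only values on V matter);
  vertex functions are nat => real (only values on V matter).\<close>

definition edge_rel :: "nat \<Rightarrow> (nat \<Rightarrow> nat \<Rightarrow> real) \<Rightarrow> (nat \<times> nat) set" where
  "edge_rel n w = {(a, b). a \<in> {1..n} \<and> b \<in> {1..n} \<and> w a b > 0}"

definition wgraph :: "nat \<Rightarrow> (nat \<Rightarrow> nat \<Rightarrow> real) \<Rightarrow> bool" where
  "wgraph n w \<longleftrightarrow> 2 \<le> n
     \<and> (\<forall>i\<in>{1..n}. \<forall>j\<in>{1..n}. w i j = w j i \<and> w i j \<ge> 0)
     \<and> (\<forall>i\<in>{1..n}. w i i = 0)
     \<and> (\<forall>i\<in>{1..n}. \<forall>j\<in>{1..n}. (i, j) \<in> (edge_rel n w)\<^sup>*)"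

definition deg :: "nat \<Rightarrow> (nat \<Rightarrow> nat \<Rightarrow> real) \<Rightarrow> nat \<Rightarrow> real" where
  "deg n w i = (\<Sum>j\<in>{1..n}. w i j)"

definition glap :: "nat \<Rightarrow> (nat \<Rightarrow> nat \<Rightarrow> real) \<Rightarrow> real \<Rightarrow> (nat \<Rightarrow> real) \<Rightarrow> nat \<Rightarrow> real" where
  "glap n w r u i = deg n w i powr (-r) * (\<Sum>j\<in>{1..n}. w i j * (u i - u j))"

definition gmass :: "nat \<Rightarrow> (nat \<Rightarrow> nat \<Rightarrow> real) \<Rightarrow> real \<Rightarrow> (nat \<Rightarrow> real) \<Rightarrow> real" where
  "gmass n w r u = (\<Sum>i\<in>{1..n}. deg n w i powr r * u i)"

definition gavg :: "nat \<Rightarrow> (nat \<Rightarrow> nat \<Rightarrow> real) \<Rightarrow> real \<Rightarrow> (nat \<Rightarrow> real) \<Rightarrow> nat \<Rightarrow> real" where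
  "gavg n w r u = (\<lambda>i. if i \<in> {1..n} then gmass n w r u / (\<Sum>j\<in>{1..n}. deg n w j powr r) else 0)"

definition gpot :: "nat \<Rightarrow> (nat \<Rightarrow> nat \<Rightarrow> real) \<Rightarrow> real \<Rightarrow> (nat \<Rightarrow> real) \<Rightarrow> nat \<Rightarrow> real" where
  "gpot n w r u = (THE \<phi>. (\<forall>i\<in>{1..n}. glap n w r \<phi> i = u i - gavg n w r u i)
                      \<and> gmass n w r \<phi> = 0 \<and> (\<forall>i. i \<notin> {1..n} \<longrightarrow> \<phi> i = 0))"

definition Lop :: "nat \<Rightarrow> (nat \<Rightarrow> nat \<Rightarrow> real) \<Rightarrow> real \<Rightarrow> real \<Rightarrow> (nat \<Rightarrow> real) \<Rightarrow> nat \<Rightarrow> real" where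
  "Lop n w r \<gamma> u = (\<lambda>i. glap n w r u i + \<gamma> * gpot n w r u i)"

text \<open>e^{-tau L} v, via the exponential series (L is linear on the finite-dimensional space).\<close>
definition heat :: "nat \<Rightarrow> (nat \<Rightarrow> nat \<Rightarrow> real) \<Rightarrow> real \<Rightarrow> real \<Rightarrow> real \<Rightarrow> (nat \<Rightarrow> real) \<Rightarrow> nat \<Rightarrow> real" where
  "heat n w r \<gamma> \<tau> v = (\<lambda>i. \<Sum>m. ((- \<tau>) ^ m / fact m) * ((Lop n w r \<gamma> ^^ m) v) i)"

definition okmbo_step :: "nat \<Rightarrow> (nat \<Rightarrow> nat \<Rightarrow> real) \<Rightarrow> real \<Rightarrow> real \<Rightarrow> real \<Rightarrow> nat set \<Rightarrow> nat set" where
  "okmbo_step n w r \<gamma> \<tau> S = {i \<in> {1..n}. heat n w r \<gamma> \<tau> (\<lambda>i. if i \<in> S then 1 else 0) i \<ge> 1/2}"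

end

theory Submission
  imports Defs "Jordan_Normal_Form.Determinant"
begin

locale grph =
  fixes n :: nat and w :: "nat \<Rightarrow> nat \<Rightarrow> real" and r \<gamma> :: real
  assumes wg: "wgraph n w"
begin

abbreviation V where "V \<equiv> {1..n}"
definition p where "p i = deg n w i powr r"
definition D where "D = (\<Sum>j\<in>V. p j)"

lemma n2: "2 \<le> n" and wsym: "i\<in>V \<Longrightarrow> j\<in>V \<Longrightarrow> w i j = w j i"
  and wnn: "i\<in>V \<Longrightarrow> j\<in>V \<Longrightarrow> w i j \<ge> 0"
  and conn: "i\<in>V \<Longrightarrow> j\<in>V \<Longrightarrow> (i,j) \<in> (edge_rel n w)\<^sup>*"
  using wg unfolding wgraph_def by auto

lemma dpos: assumes i: "i\<in>V" shows "deg n w i > 0"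
proof -
  define j where "j = (if i = 1 then 2 else (1::nat))"
  have j: "j \<in> V" "j \<noteq> i" using n2 i by (auto simp: j_def)
  from conn[OF i j(1)] j(2) obtain k where "(i,k) \<in> edge_rel n w"
    by (metis converse_rtranclE)
  hence k: "k\<in>V" "w i k > 0" by (auto simp: edge_rel_def)
  have "w i k \<le> deg n w i" unfolding deg_def using k i wnn by (intro member_le_sum) auto
  thus ?thesis using k by linarith
qed

lemma ppos: assumes "i\<in>V" shows "p i > 0" using dpos[OF assms] by (simp add: p_def)
lemma pq: assumes "i\<in>V" shows "p i * deg n w i powr (-r) = 1"
  using dpos[OF assms] by (simp add: p_def powr_minus field_simps)
lemma Dpos: "D > 0" unfolding D_def using ppos n2 by (intro sum_pos) auto

definition B where "B u v = (\<Sum>i\<in>V. \<Sum>j\<in>V. w i j * (u i - u j) * v i)"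

lemma B_half: "B u v = (\<Sum>i\<in>V. \<Sum>j\<in>V. w i j * (u i - u j) * (v i - v j)) / 2"
proof -
  have "B u v = (\<Sum>i\<in>V. \<Sum>j\<in>V. w j i * (u j - u i) * v j)" unfolding B_def by (rule sum.swap)
  also have "\<dots> = (\<Sum>i\<in>V. \<Sum>j\<in>V. - (w i j * (u i - u j) * v j))"
    by (intro sum.cong refl) (simp add: wsym algebra_simps)
  finally have "B u v = - (\<Sum>i\<in>V. \<Sum>j\<in>V. w i j * (u i - u j) * v j)" by (simp add: sum_negf)
  hence "2 * B u v = B u v - (\<Sum>i\<in>V. \<Sum>j\<in>V. w i j * (u i - u j) * v j)" by simp
  also have "\<dots> = (\<Sum>i\<in>V. \<Sum>j\<in>V. w i j * (u i - u j) * (v i - v j))"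
    unfolding B_def by (simp add: sum_subtractf[symmetric] algebra_simps)
  finally show ?thesis by simp
qed

lemma B_sym: "B u v = B v u"
  unfolding B_half by (simp add: algebra_simps)

lemma B_zero: assumes "B u u = 0" "i\<in>V" "j\<in>V" "w i j > 0" shows "u i = u j"
proof -
  have nn: "\<And>i j. i\<in>V \<Longrightarrow> j\<in>V \<Longrightarrow> 0 \<le> w i j * (u i - u j) * (u i - u j)"
  proof -
    fix i j assume "i\<in>V" "j\<in>V"
    have "0 \<le> w i j * ((u i - u j) * (u i - u j))" by (rule mult_nonneg_nonneg[OF wnn zero_le_square]) fact+
    thus "0 \<le> w i j * (u i - u j) * (u i - u j)" by (simp add: mult.assoc)
  qed
  have "(\<Sum>i\<in>V. \<Sum>j\<in>V. w i j * (u i - u j) * (u i - u j)) = 0" using assms(1) B_half by simp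
  hence "(\<Sum>j\<in>V. w i j * (u i - u j) * (u i - u j)) = 0"
    using nn assms(2) by (subst (asm) sum_nonneg_eq_0_iff) (auto intro!: sum_nonneg)
  hence "w i j * (u i - u j) * (u i - u j) = 0"
    using nn assms(2,3) by (subst (asm) sum_nonneg_eq_0_iff) auto
  thus ?thesis using assms(4) by simp
qed

definition ip where "ip f g = (\<Sum>i\<in>V. p i * f i * g i)"

lemma ip_comm: "ip f g = ip g f" unfolding ip_def by (simp add: algebra_simps)

lemma ip_cong: "(\<And>i. i\<in>V \<Longrightarrow> f i = f' i) \<Longrightarrow> (\<And>i. i\<in>V \<Longrightarrow> g i = g' i) \<Longrightarrow> ip f g = ip f' g'"
  unfolding ip_def by (intro sum.cong) auto

lemma ip_glap: "ip (glap n w r u) v = B u v"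
  unfolding ip_def B_def
proof (intro sum.cong refl)
  fix i assume i: "i\<in>V"
  have "p i * glap n w r u i * v i = (p i * deg n w i powr (-r)) * (\<Sum>j\<in>V. w i j * (u i - u j)) * v i"
    unfolding glap_def by (simp add: algebra_simps)
  also have "\<dots> = (\<Sum>j\<in>V. w i j * (u i - u j) * v i)" using pq[OF i] by (simp add: sum_distrib_right)
  finally show "p i * glap n w r u i * v i = (\<Sum>j\<in>V. w i j * (u i - u j) * v i)" .
qed

lemma glap_ker: assumes "\<forall>i\<in>V. glap n w r u i = 0" "i\<in>V" "j\<in>V" shows "u i = u j"
proof -
  have "B u u = 0" unfolding ip_glap[symmetric] ip_def using assms(1) by simp
  have "(i,j) \<in> (edge_rel n w)\<^sup>*" using conn assms by auto
  thus ?thesis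
  proof (induction rule: rtrancl_induct)
    case (step y z)
    thus ?case using B_zero[OF \<open>B u u = 0\<close>] by (auto simp: edge_rel_def)
  qed simp
qed

lemma gmass_eq: "gmass n w r f = (\<Sum>i\<in>V. p i * f i)" by (simp add: gmass_def p_def)
lemma gavg_eq: "i\<in>V \<Longrightarrow> gavg n w r u i = gmass n w r u / D"
  by (simp add: gavg_def D_def p_def)

lemma glap_lin: assumes "\<forall>i\<in>V. u' i = a*u i + b*v i" "i\<in>V"
  shows "glap n w r u' i = a*glap n w r u i + b * glap n w r v i"
proof -
  have "(\<Sum>j\<in>V. w i j * (u' i - u' j)) = (\<Sum>j\<in>V. a * (w i j * (u i - u j)) + b * (w i j * (v i - v j)))"
    using assms by (intro sum.cong) (auto simp: algebra_simps)
  also have "\<dots> = a * (\<Sum>j\<in>V. w i j * (u i - u j)) + b * (\<Sum>j\<in>V. w i j * (v i - v j))"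
    by (simp add: sum.distrib sum_distrib_left)
  finally have e: "(\<Sum>j\<in>V. w i j * (u' i - u' j)) = a * (\<Sum>j\<in>V. w i j * (u i - u j)) + b * (\<Sum>j\<in>V. w i j * (v i - v j))" .
  show ?thesis unfolding glap_def e by (simp only: distrib_left mult.left_commute)
qed

lemma gmass_lin: assumes "\<forall>i\<in>V. u' i = a*u i + b*v i"
  shows "gmass n w r u' = a * gmass n w r u + b * gmass n w r v"
proof -
  have "(\<Sum>i\<in>V. p i * u' i) = (\<Sum>i\<in>V. a * (p i * u i) + b * (p i * v i))"
    using assms by (intro sum.cong) (auto simp: algebra_simps)
  thus ?thesis unfolding gmass_eq by (simp add: sum.distrib sum_distrib_left)
qed


lemma sum_const_on: assumes "\<forall>i\<in>V. f i = c" shows "(\<Sum>i\<in>V. p i * f i) = D * c"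
proof -
  have "(\<Sum>i\<in>V. p i * f i) = (\<Sum>i\<in>V. p i * c)" using assms by (intro sum.cong) auto
  thus ?thesis by (simp add: D_def sum_distrib_right)
qed

definition P where "P u \<phi> \<longleftrightarrow> (\<forall>i\<in>V. glap n w r \<phi> i = u i - gavg n w r u i)
                      \<and> gmass n w r \<phi> = 0 \<and> (\<forall>i. i \<notin> V \<longrightarrow> \<phi> i = 0)"

lemma PD1: "P u \<phi> \<Longrightarrow> i\<in>V \<Longrightarrow> glap n w r \<phi> i = u i - gavg n w r u i" unfolding P_def by blast
lemma PD2: "P u \<phi> \<Longrightarrow> gmass n w r \<phi> = 0" unfolding P_def by blast
lemma PD3: "P u \<phi> \<Longrightarrow> i \<notin> V \<Longrightarrow> \<phi> i = 0" unfolding P_def by blast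

lemma P_unique: assumes "P u \<phi>" "P u \<psi>" shows "\<phi> = \<psi>"
proof -
  define z where "z = (\<lambda>i. \<phi> i - \<psi> i)"
  have gl: "glap n w r z i = 1 * glap n w r \<phi> i + (-1) * glap n w r \<psi> i" if "i\<in>V" for i
    by (rule glap_lin[OF _ that]) (simp add: z_def)
  have "\<forall>i\<in>V. glap n w r z i = 0"
  proof
    fix i assume i: "i\<in>V"
    have "glap n w r \<phi> i = u i - gavg n w r u i" "glap n w r \<psi> i = u i - gavg n w r u i"
      using PD1[OF assms(1) i] PD1[OF assms(2) i] .
    thus "glap n w r z i = 0" using gl[OF i] by simp
  qed
  hence zc: "\<forall>i\<in>V. z i = z 1"
  proof (intro ballI)
    fix i assume "\<forall>i\<in>V. glap n w r z i = 0" "i\<in>V"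
    moreover have "(1::nat) \<in> V" using n2 by simp
    ultimately show "z i = z 1" by (rule glap_ker)
  qed
  have "gmass n w r z = 1 * gmass n w r \<phi> + (-1) * gmass n w r \<psi>"
    by (rule gmass_lin) (simp add: z_def)
  hence "0 = (\<Sum>i\<in>V. p i * z i)" using PD2[OF assms(1)] PD2[OF assms(2)] by (simp add: gmass_eq)
  also have "\<dots> = D * z 1" by (rule sum_const_on[OF zc])
  finally have "z 1 = 0" using Dpos by simp
  show ?thesis
  proof
    fix i show "\<phi> i = \<psi> i"
    proof (cases "i \<in> V")
      case True
      hence "z i = z 1" using zc by blast
      hence "\<phi> i - \<psi> i = 0" using \<open>z 1 = 0\<close> unfolding z_def by simp
      thus ?thesis by simp
    next
      case False thus ?thesis using PD3[OF assms(1)] PD3[OF assms(2)] by simp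
    qed
  qed
qed

definition lin :: "((nat \<Rightarrow> real) \<Rightarrow> nat \<Rightarrow> real) \<Rightarrow> bool" where "lin F \<longleftrightarrow> (\<forall>u u' v a b. (\<forall>i\<in>V. u' i = a*u i + b*v i) \<longrightarrow> (\<forall>i\<in>V. F u' i = a*F u i + b*F v i))"

definition ind :: "nat \<Rightarrow> nat \<Rightarrow> real" where "ind j = (\<lambda>k. if k = j then 1 else 0)"

lemma linD: "lin F \<Longrightarrow> (\<forall>i\<in>V. u' i = a*u i + b*v i) \<Longrightarrow> i\<in>V \<Longrightarrow> F u' i = a*F u i + b*F v i"
  unfolding lin_def by blast

lemma lin_agree: assumes "lin F" "\<forall>i\<in>V. u' i = u i" "i\<in>V" shows "F u' i = F u i"
proof -
  have "F u' i = 1*F u i + 0*F u i" by (rule linD[OF assms(1) _ assms(3)]) (use assms(2) in simp)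
  thus ?thesis by simp
qed

lemma lin_rep: assumes F: "lin F" and i: "i\<in>V" shows "F u i = (\<Sum>j\<in>V. u j * F (ind j) i)"
proof -
  have "\<forall>i\<in>V. F (\<lambda>k. \<Sum>j\<in>S. u j * ind j k) i = (\<Sum>j\<in>S. u j * F (ind j) i)" if "finite S" for S
    using that
  proof (induction S rule: finite_induct)
    case empty
    have "\<forall>i\<in>V. F (\<lambda>k. 0) i = 0 * F u i + 0 * F u i" using linD[OF F, of "\<lambda>k. 0" 0 u 0 u] by simp
    thus ?case by simp
  next
    case (insert j S)
    have "\<forall>i\<in>V. (\<lambda>k. \<Sum>j\<in>insert j S. u j * ind j k) i = 1 * (\<lambda>k. \<Sum>j\<in>S. u j * ind j k) i + u j * ind j i"
      using insert by simp
    hence eq: "\<forall>i\<in>V. (\<lambda>k. \<Sum>j\<in>insert j S. u j * ind j k) i = 1 * (\<lambda>k. \<Sum>j\<in>S. u j * ind j k) i + u j * ind j i"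
      by simp
    have "\<forall>i\<in>V. F (\<lambda>k. \<Sum>j\<in>insert j S. u j * ind j k) i = 1 * F (\<lambda>k. \<Sum>j\<in>S. u j * ind j k) i + u j * F (ind j) i"
      by (intro ballI linD[OF F eq])
    thus ?case using insert by simp
  qed
  hence "F (\<lambda>k. \<Sum>j\<in>V. u j * ind j k) i = (\<Sum>j\<in>V. u j * F (ind j) i)" using i by auto
  moreover have "F (\<lambda>k. \<Sum>j\<in>V. u j * ind j k) i = F u i"
    by (rule lin_agree[OF F _ i]) (simp add: ind_def if_distrib cong: if_cong)
  ultimately show ?thesis by simp
qed

definition nr :: "(nat \<Rightarrow> real) \<Rightarrow> real" where "nr u = (\<Sum>i\<in>V. \<bar>u i\<bar>)"

lemma nr_ge: "i\<in>V \<Longrightarrow> \<bar>u i\<bar> \<le> nr u" unfolding nr_def by (rule member_le_sum[where f="\<lambda>i. \<bar>u i\<bar>"]) auto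

lemma lin_bound: assumes F: "lin F" shows "\<exists>C\<ge>0. \<forall>u. nr (F u) \<le> C * nr u"
proof (intro exI conjI allI)
  define C where "C = (\<Sum>j\<in>V. \<Sum>i\<in>V. \<bar>F (ind j) i\<bar>)"
  show "C \<ge> 0" unfolding C_def by (intro sum_nonneg) auto
  fix u
  have "nr (F u) = (\<Sum>i\<in>V. \<bar>\<Sum>j\<in>V. u j * F (ind j) i\<bar>)"
    unfolding nr_def using lin_rep[OF F] by (intro sum.cong) auto
  also have "\<dots> \<le> (\<Sum>i\<in>V. \<Sum>j\<in>V. \<bar>u j\<bar> * \<bar>F (ind j) i\<bar>)"
    by (intro sum_mono order.trans[OF sum_abs]) (simp add: abs_mult)
  also have "\<dots> = (\<Sum>j\<in>V. \<bar>u j\<bar> * (\<Sum>i\<in>V. \<bar>F (ind j) i\<bar>))"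
    by (subst sum.swap) (simp add: sum_distrib_left)
  also have "\<dots> \<le> (\<Sum>j\<in>V. \<bar>u j\<bar> * C)"
  proof (intro sum_mono mult_left_mono)
    fix j assume "j \<in> V"
    thus "(\<Sum>i\<in>V. \<bar>F (ind j) i\<bar>) \<le> C" unfolding C_def
      by (intro member_le_sum[where f="\<lambda>j. \<Sum>i\<in>V. \<bar>F (ind j) i\<bar>"]) (auto intro: sum_nonneg)
  qed simp
  also have "\<dots> = C * nr u" unfolding nr_def sum_distrib_left by (simp add: mult.commute)
  finally show "nr (F u) \<le> C * nr u" .
qed

lemma lin_glap: "lin (glap n w r)" unfolding lin_def using glap_lin by blast

definition Top where "Top \<phi> i = glap n w r \<phi> i + gmass n w r \<phi> / D"

lemma lin_Top: "lin Top"
  unfolding lin_def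
proof (intro allI impI ballI)
  fix u u' v :: "nat \<Rightarrow> real" and a b :: real and i assume h: "\<forall>i\<in>V. u' i = a * u i + b * v i" and i: "i\<in>V"
  show "Top u' i = a * Top u i + b * Top v i"
    unfolding Top_def glap_lin[OF h i] gmass_lin[OF h] using Dpos by (simp add: field_simps)
qed

lemma B_one: "B (\<lambda>_. c) v = 0" unfolding B_def by simp

lemma mass_Top: "(\<Sum>i\<in>V. p i * Top \<phi> i) = gmass n w r \<phi>"
proof -
  have "(\<Sum>i\<in>V. p i * Top \<phi> i) = (\<Sum>i\<in>V. p i * glap n w r \<phi> i * 1) + (\<Sum>i\<in>V. p i) * (gmass n w r \<phi> / D)"
    unfolding Top_def by (simp only: distrib_left sum.distrib sum_distrib_right mult_1_right)
  also have "(\<Sum>i\<in>V. p i * glap n w r \<phi> i * 1) = 0"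
    using ip_glap[of \<phi> "\<lambda>_. 1"] B_sym B_one unfolding ip_def by simp
  finally show ?thesis using Dpos by (simp add: D_def)
qed

lemma Top_inj: assumes "\<forall>i\<in>V. Top \<phi> i = 0" shows "\<forall>i\<in>V. \<phi> i = 0"
proof -
  have m: "gmass n w r \<phi> = 0" using mass_Top[of \<phi>] assms by simp
  hence "\<forall>i\<in>V. glap n w r \<phi> i = 0" using assms by (simp add: Top_def)
  hence zc: "\<forall>i\<in>V. \<phi> i = \<phi> 1"
  proof (intro ballI)
    fix i assume "\<forall>i\<in>V. glap n w r \<phi> i = 0" "i\<in>V"
    moreover have "(1::nat) \<in> V" using n2 by simp
    ultimately show "\<phi> i = \<phi> 1" by (rule glap_ker)
  qed
  have "0 = (\<Sum>i\<in>V. p i * \<phi> i)" using m by (simp add: gmass_eq)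
  also have "\<dots> = D * \<phi> 1" by (rule sum_const_on[OF zc])
  finally have "\<phi> 1 = 0" using Dpos by simp
  thus ?thesis using zc by metis
qed


lemma P_exists: "\<exists>\<phi>. P u \<phi>"
proof -
  define A :: "real mat" where "A = mat n n (\<lambda>(i,j). Top (ind (Suc j)) (Suc i))"
  have A: "A \<in> carrier_mat n n" by (simp add: A_def)
  define phi where "phi = (\<lambda>v::real vec. \<lambda>k. if k \<in> V then v $ (k - 1) else 0)"
  have Av: "(A *\<^sub>v v) $ i = Top (phi v) (Suc i)" if "v \<in> carrier_vec n" "i < n" for v i
  proof -
    have "(A *\<^sub>v v) $ i = (\<Sum>j<n. Top (ind (Suc j)) (Suc i) * v $ j)"
      using that by (simp add: A_def scalar_prod_def atLeast0LessThan)
    also have "\<dots> = (\<Sum>j<n. phi v (Suc j) * Top (ind (Suc j)) (Suc i))"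
      by (intro sum.cong) (auto simp: phi_def)
    also have "\<dots> = (\<Sum>k\<in>V. phi v k * Top (ind k) (Suc i))"
      by (simp add: sum.atLeast1_atMost_eq)
    also have "\<dots> = Top (phi v) (Suc i)" using lin_rep[OF lin_Top, of "Suc i" "phi v"] that by simp
    finally show ?thesis .
  qed
  have "det A \<noteq> 0"
  proof
    assume "det A = 0"
    then obtain v where v: "v \<in> carrier_vec n" "v \<noteq> 0\<^sub>v n" "A *\<^sub>v v = 0\<^sub>v n"
      using det_0_iff_vec_prod_zero_field[OF A] by auto
    have "\<forall>k\<in>V. Top (phi v) k = 0"
    proof
      fix k assume k: "k\<in>V"
      then have "Top (phi v) k = (A *\<^sub>v v) $ (k-1)" using Av[OF v(1), of "k-1"] by auto
      also have "\<dots> = 0" using v(3) k by auto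
      finally show "Top (phi v) k = 0" .
    qed
    hence z: "\<forall>k\<in>V. phi v k = 0" by (rule Top_inj)
    have "v = 0\<^sub>v n"
    proof (rule eq_vecI)
      fix j assume "j < dim_vec (0\<^sub>v n :: real vec)"
      hence j: "j < n" by simp
      have "phi v (Suc j) = 0" using z j by auto
      thus "v $ j = 0\<^sub>v n $ j" using j by (simp add: phi_def)
    qed (use v(1) in simp)
    with v(2) show False by simp
  qed
  then have "A \<in> Units (ring_mat TYPE(real) n ())" by (rule det_non_zero_imp_unit[OF A])
  then obtain Bm where Bm: "Bm \<in> carrier_mat n n" "A * Bm = 1\<^sub>m n"
    by (auto simp: Units_def ring_mat_def)
  define f where "f = (\<lambda>i. u i - gavg n w r u i)"
  define b where "b = vec n (\<lambda>i. f (Suc i))"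
  define x where "x = Bm *\<^sub>v b"
  have x: "x \<in> carrier_vec n" using Bm by (simp add: x_def b_def)
  have "A *\<^sub>v x = (A * Bm) *\<^sub>v b" by (subst assoc_mult_mat_vec[OF A Bm(1)]) (auto simp: x_def b_def)
  also have "\<dots> = b" using Bm by (simp add: b_def)
  finally have Ax: "A *\<^sub>v x = b" .
  have Tf: "Top (phi x) k = f k" if k: "k\<in>V" for k
  proof -
    have "Top (phi x) k = (A *\<^sub>v x) $ (k-1)" using Av[OF x, of "k-1"] k by auto
    also have "\<dots> = f k"
    proof -
      have "k - 1 < n" "Suc (k - 1) = k" using k by auto
      thus ?thesis by (simp add: Ax b_def)
    qed
    finally show ?thesis .
  qed
  have "gmass n w r (phi x) = (\<Sum>k\<in>V. p k * f k)" using mass_Top[of "phi x"] Tf by simp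
  also have "\<dots> = (\<Sum>k\<in>V. p k * u k) - (\<Sum>k\<in>V. p k) * (gmass n w r u / D)"
    unfolding f_def by (simp add: gavg_eq right_diff_distrib sum_subtractf sum_distrib_right sum_divide_distrib)
  also have "\<dots> = 0" using Dpos unfolding D_def[symmetric] gmass_eq by simp
  finally have m0: "gmass n w r (phi x) = 0" .
  have "P u (phi x)" unfolding P_def
  proof (intro conjI ballI allI impI)
    fix k assume "k\<in>V" thus "glap n w r (phi x) k = u k - gavg n w r u k"
      using Tf[of k] m0 by (simp add: Top_def f_def)
  qed (fact m0, auto simp: phi_def)
  thus ?thesis by blast
qed

lemma P_gpot: "P u (gpot n w r u)"
proof -
  have "\<exists>!\<phi>. P u \<phi>" using P_exists P_unique by blast
  hence "P u (THE \<phi>. P u \<phi>)" by (rule theI')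
  moreover have "gpot n w r u = (THE \<phi>. P u \<phi>)" by (simp add: gpot_def P_def)
  ultimately show ?thesis by simp
qed

lemma gpot_eq: "P u \<phi> \<Longrightarrow> gpot n w r u = \<phi>" using P_unique P_gpot by blast

lemma lin_gpot: "lin (gpot n w r)"
  unfolding lin_def
proof (intro allI impI)
  fix u u' v :: "nat \<Rightarrow> real" and a b :: real assume h: "\<forall>i\<in>V. u' i = a * u i + b * v i"
  define \<phi> where "\<phi> = (\<lambda>i. a * gpot n w r u i + b * gpot n w r v i)"
  have Pu: "P u (gpot n w r u)" and Pv: "P v (gpot n w r v)" by (rule P_gpot)+
  have "P u' \<phi>" unfolding P_def
  proof (intro conjI ballI allI impI)
    fix k assume k: "k\<in>V"
    have "glap n w r \<phi> k = a * glap n w r (gpot n w r u) k + b * glap n w r (gpot n w r v) k"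
      by (rule glap_lin) (use k in \<open>auto simp: \<phi>_def\<close>)
    also have "\<dots> = a * (u k - gavg n w r u k) + b * (v k - gavg n w r v k)"
      using Pu Pv k by (simp add: P_def)
    also have "\<dots> = u' k - gavg n w r u' k"
      using h k gmass_lin[OF h] Dpos by (simp add: gavg_eq field_simps)
    finally show "glap n w r \<phi> k = u' k - gavg n w r u' k" .
  next
    have "gmass n w r \<phi> = a * gmass n w r (gpot n w r u) + b * gmass n w r (gpot n w r v)"
      by (rule gmass_lin) (simp add: \<phi>_def)
    thus "gmass n w r \<phi> = 0" using Pu Pv by (simp add: P_def)
  next
    fix k assume "k \<notin> V" thus "\<phi> k = 0" using Pu Pv by (simp add: P_def \<phi>_def)
  qed
  hence "gpot n w r u' = \<phi>" by (rule gpot_eq)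
  thus "\<forall>i\<in>V. gpot n w r u' i = a * gpot n w r u i + b * gpot n w r v i" by (simp add: \<phi>_def)
qed


abbreviation Lp where "Lp \<equiv> Lop n w r \<gamma>"
abbreviation hh where "hh t \<equiv> heat n w r \<gamma> t"

lemma lin_Lop: "lin Lp"
  unfolding lin_def
proof (intro allI impI ballI)
  fix u u' v :: "nat \<Rightarrow> real" and a b :: real and i assume h: "\<forall>i\<in>V. u' i = a * u i + b * v i" and i: "i\<in>V"
  show "Lp u' i = a * Lp u i + b * Lp v i"
    unfolding Lop_def glap_lin[OF h i] linD[OF lin_gpot h i] by (simp add: algebra_simps)
qed

lemma lin_pow: "lin (Lp ^^ m)"
proof (induction m)
  case 0 thus ?case unfolding lin_def by simp
next
  case (Suc m)
  show ?case unfolding lin_def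
  proof (intro allI impI ballI)
    fix u u' v :: "nat \<Rightarrow> real" and a b :: real and i assume h: "\<forall>i\<in>V. u' i = a * u i + b * v i" and i: "i\<in>V"
    have "\<forall>i\<in>V. (Lp ^^ m) u' i = a * (Lp ^^ m) u i + b * (Lp ^^ m) v i"
      using linD[OF Suc h] by blast
    from linD[OF lin_Lop this i]
    show "(Lp ^^ Suc m) u' i = a * (Lp ^^ Suc m) u i + b * (Lp ^^ Suc m) v i" by simp
  qed
qed

lemma gpot_harm: assumes i: "i\<in>V" shows "v i = glap n w r (gpot n w r v) i + gmass n w r v / D"
  using PD1[OF P_gpot i, of v] gavg_eq[OF i] by simp

lemma ip_gpot: "ip (gpot n w r u) v = B (gpot n w r v) (gpot n w r u)"
proof -
  have "ip (gpot n w r u) v = (\<Sum>i\<in>V. p i * gpot n w r u i * (glap n w r (gpot n w r v) i + gmass n w r v / D))"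
    unfolding ip_def using gpot_harm by (intro sum.cong) auto
  also have "\<dots> = ip (gpot n w r u) (glap n w r (gpot n w r v)) + gmass n w r (gpot n w r u) * (gmass n w r v / D)"
    unfolding ip_def gmass_eq by (simp only: distrib_left sum.distrib sum_distrib_right)
  also have "\<dots> = B (gpot n w r v) (gpot n w r u)"
    using PD2[OF P_gpot] ip_glap ip_comm by simp
  finally show ?thesis .
qed

lemma ip_Lop: "ip (Lp u) v = B u v + \<gamma> * B (gpot n w r v) (gpot n w r u)"
proof -
  have "ip (Lp u) v = (\<Sum>i\<in>V. p i * glap n w r u i * v i + \<gamma> * (p i * gpot n w r u i * v i))"
    unfolding ip_def Lop_def by (intro sum.cong refl) (simp add: algebra_simps)
  also have "\<dots> = ip (glap n w r u) v + \<gamma> * ip (gpot n w r u) v"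
    unfolding ip_def by (simp only: sum.distrib sum_distrib_left)
  finally have "ip (Lp u) v = ip (glap n w r u) v + \<gamma> * ip (gpot n w r u) v" .
  thus ?thesis using ip_glap ip_gpot by simp
qed

lemma L_sa: "ip (Lp u) v = ip u (Lp v)"
  using ip_Lop[of u v] ip_Lop[of v u] ip_comm[of u "Lp v"] B_sym by metis

lemma ip_pow: "ip ((Lp^^a) u) ((Lp^^b) v) = ip ((Lp^^(a+b)) u) v"
proof (induction b arbitrary: a)
  case 0 thus ?case by simp
next
  case (Suc b)
  have "ip ((Lp^^a) u) ((Lp^^Suc b) v) = ip ((Lp^^a) u) (Lp ((Lp^^b) v))" by simp
  also have "\<dots> = ip ((Lp^^Suc a) u) ((Lp^^b) v)" using L_sa by simp
  also have "\<dots> = ip ((Lp^^(Suc a + b)) u) v" by (rule Suc.IH)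
  finally show ?case by simp
qed

lemma ip_pow_sym: "ip ((Lp^^m) u) v = ip ((Lp^^m) v) u"
  using ip_pow[of 0 u m v] ip_comm by simp

definition CL where "CL = (SOME C. C \<ge> 0 \<and> (\<forall>u. nr (Lp u) \<le> C * nr u))"

lemma CL: "CL \<ge> 0" "nr (Lp u) \<le> CL * nr u"
proof -
  have "\<exists>C. C \<ge> 0 \<and> (\<forall>u. nr (Lp u) \<le> C * nr u)" using lin_bound[OF lin_Lop] by blast
  from someI_ex[OF this] show "CL \<ge> 0" "nr (Lp u) \<le> CL * nr u" unfolding CL_def by auto
qed

lemma nr_nonneg: "nr u \<ge> 0" unfolding nr_def by (intro sum_nonneg) auto

lemma nr_pow: "nr ((Lp^^m) u) \<le> CL^m * nr u"
proof (induction m)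
  case 0 thus ?case by simp
next
  case (Suc m)
  have "nr ((Lp^^Suc m) u) \<le> CL * nr ((Lp^^m) u)" using CL(2) by simp
  also have "\<dots> \<le> CL * (CL^m * nr u)" by (rule mult_left_mono[OF Suc CL(1)])
  finally show ?case by (simp add: mult.assoc)
qed

lemma coef_summ: assumes i: "i\<in>V" shows "summable (\<lambda>m. norm ((-t)^m / fact m * (Lp^^m) u i))"
proof (rule summable_comparison_test'[where N=0])
  show "summable (\<lambda>m. nr u * (inverse (fact m) * (\<bar>t\<bar> * CL)^m))"
    by (intro summable_mult summable_exp)
  fix m :: nat
  have "norm (norm ((-t)^m / fact m * (Lp^^m) u i)) = \<bar>t\<bar>^m / fact m * \<bar>(Lp^^m) u i\<bar>"
    by (simp add: abs_mult power_abs)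
  also have "\<dots> \<le> \<bar>t\<bar>^m / fact m * (CL^m * nr u)"
    by (intro mult_left_mono order.trans[OF nr_ge[OF i] nr_pow]) auto
  also have "\<dots> = nr u * (inverse (fact m) * (\<bar>t\<bar> * CL)^m)"
    by (simp add: power_mult_distrib field_simps)
  finally show "norm (norm ((-t)^m / fact m * (Lp^^m) u i)) \<le> nr u * (inverse (fact m) * (\<bar>t\<bar> * CL)^m)" .
qed

lemma summ: "i\<in>V \<Longrightarrow> summable (\<lambda>m. (-t)^m / fact m * (Lp^^m) u i)"
  by (rule summable_norm_cancel[OF coef_summ])

lemma suminf_lin2: assumes "summable f" "summable g"
  shows "(\<Sum>m. a * f m + b * g m) = a * suminf f + b * (suminf g :: real)"
proof -
  have "(\<Sum>m. a * f m + b * g m) = (\<Sum>m. a * f m) + (\<Sum>m. b * g m)"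
    by (rule suminf_add[symmetric]) (use assms in \<open>auto intro: summable_mult\<close>)
  thus ?thesis using suminf_mult[OF assms(1)] suminf_mult[OF assms(2)] by simp
qed

lemma lin_heat: "lin (hh t)"
  unfolding lin_def
proof (intro allI impI ballI)
  fix u u' v :: "nat \<Rightarrow> real" and a b :: real and i assume h: "\<forall>i\<in>V. u' i = a * u i + b * v i" and i: "i\<in>V"
  have "(\<lambda>m. (-t)^m / fact m * (Lp^^m) u' i) = (\<lambda>m. a * ((-t)^m / fact m * (Lp^^m) u i) + b * ((-t)^m / fact m * (Lp^^m) v i))"
    using linD[OF lin_pow h i] by (simp add: algebra_simps)
  thus "hh t u' i = a * hh t u i + b * hh t v i"
    unfolding heat_def using suminf_lin2[OF summ[OF i] summ[OF i]] by simp
qed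

lemma heat_ip: "ip (hh t u) v = (\<Sum>m. (-t)^m / fact m * ip ((Lp^^m) u) v)"
proof -
  have "ip (hh t u) v = (\<Sum>i\<in>V. \<Sum>m. (p i * v i) * ((-t)^m / fact m * (Lp^^m) u i))"
    unfolding ip_def heat_def
  proof (intro sum.cong refl)
    fix i assume i: "i\<in>V"
    show "p i * (\<Sum>m. (-t)^m / fact m * (Lp^^m) u i) * v i = (\<Sum>m. (p i * v i) * ((-t)^m / fact m * (Lp^^m) u i))"
      using suminf_mult[OF summ[OF i], of "p i * v i"] by (simp add: algebra_simps)
  qed
  also have "\<dots> = (\<Sum>m. \<Sum>i\<in>V. (p i * v i) * ((-t)^m / fact m * (Lp^^m) u i))"
    by (rule suminf_sum[symmetric], rule summable_mult, erule summ)
  also have "\<dots> = (\<Sum>m. (-t)^m / fact m * ip ((Lp^^m) u) v)"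
    unfolding ip_def by (intro arg_cong[where f=suminf] ext) (simp add: sum_distrib_left mult_ac)
  finally show ?thesis .
qed

lemma heat_sym: "ip (hh t u) v = ip (hh t v) u"
  unfolding heat_ip using ip_pow_sym by simp


lemma glap_const: "glap n w r (\<lambda>_. c) = (\<lambda>_. 0)" by (simp add: glap_def fun_eq_iff)

lemma gpot_one: "gpot n w r (\<lambda>_. 1) = (\<lambda>_. 0)"
proof (rule gpot_eq)
  have "gmass n w r (\<lambda>_. 1) = D" by (simp add: gmass_eq D_def)
  thus "P (\<lambda>_. 1) (\<lambda>_. 0)" unfolding P_def using Dpos glap_const[of 0]
    by (simp add: gavg_eq gmass_eq)
qed

lemma gpot_zero: "gpot n w r (\<lambda>_. 0) = (\<lambda>_. 0)"
proof (rule gpot_eq)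
  show "P (\<lambda>_. 0) (\<lambda>_. 0)" unfolding P_def using glap_const[of 0]
    by (simp add: gavg_eq gmass_eq)
qed

lemma Lp_one: "Lp (\<lambda>_. 1) = (\<lambda>_. 0)" and Lp_zero: "Lp (\<lambda>_. 0) = (\<lambda>_. 0)"
  unfolding Lop_def gpot_one gpot_zero glap_const by simp_all

lemma pow_one: "(Lp ^^ Suc m) (\<lambda>_. 1) = (\<lambda>_. 0)"
  by (induction m) (simp_all add: Lp_one Lp_zero)

lemma heat_one: "hh t (\<lambda>_. 1) i = 1"
proof -
  have "(\<lambda>m. (-t)^m / fact m * (Lp^^m) (\<lambda>_. 1) i) = (\<lambda>m. if m = 0 then 1 else 0)"
  proof
    fix m show "(-t)^m / fact m * (Lp^^m) (\<lambda>_. 1) i = (if m = 0 then 1 else 0)"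
      by (cases m) (simp_all only: pow_one, simp_all)
  qed
  moreover have "(\<lambda>m. if m = 0 then 1 else 0 :: real) sums 1"
    using sums_single[of 0 "\<lambda>_. 1::real"] by simp
  ultimately show ?thesis unfolding heat_def by (simp add: sums_iff)
qed

lemma coef_prod: fixes t :: real shows "(\<Sum>j\<le>k. ((-(t/2))^j / fact j) * ((-(t/2))^(k-j) / fact (k-j))) = (-t)^k / fact k"
proof -
  have "((-(t/2)) + (-(t/2)))^k /\<^sub>R fact k = (\<Sum>j\<le>k. ((-(t/2))^j /\<^sub>R fact j) * ((-(t/2))^(k-j) /\<^sub>R fact (k-j)))"
    by (rule exp_series_add_commuting) simp
  moreover have e: "\<And>x::real. \<And>c. x /\<^sub>R c = x / c" by (simp add: divide_inverse mult.commute)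
  moreover have "(-(t/2)) + (-(t/2)) = -t" by simp
  ultimately show ?thesis by (simp only: e)
qed

lemma heat_psd: "ip (hh t u) u \<ge> 0"
proof -
  define h where "h = hh (t/2) u"
  define a where "a = (\<lambda>i m. (-(t/2))^m / fact m * (Lp^^m) u i)"
  define X where "X = (\<lambda>i k. \<Sum>j\<le>k. a i j * a i (k - j))"
  have hX: "(X i) sums (h i * h i)" if i: "i\<in>V" for i
    unfolding X_def h_def heat_def a_def
    by (rule Cauchy_product_sums) (rule coef_summ[OF i])+
  have "0 \<le> ip h h" unfolding ip_def
  proof (intro sum_nonneg)
    fix i assume i: "i\<in>V"
    have "0 \<le> p i * (h i * h i)" by (rule mult_nonneg_nonneg[OF less_imp_le[OF ppos[OF i]] zero_le_square])
    thus "0 \<le> p i * h i * h i" by (simp add: mult.assoc)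
  qed
  also have "ip h h = (\<Sum>i\<in>V. \<Sum>k. p i * X i k)"
    unfolding ip_def
  proof (intro sum.cong refl)
    fix i assume i: "i\<in>V"
    show "p i * h i * h i = (\<Sum>k. p i * X i k)"
      using suminf_mult[OF sums_summable[OF hX[OF i]], of "p i"] sums_unique[OF hX[OF i]]
      by (simp add: mult.assoc)
  qed
  also have "\<dots> = (\<Sum>k. \<Sum>i\<in>V. p i * X i k)"
    by (rule suminf_sum[symmetric], rule summable_mult, rule sums_summable, erule hX)
  also have "\<dots> = (\<Sum>k. (-t)^k / fact k * ip ((Lp^^k) u) u)"
  proof (rule arg_cong[where f=suminf], rule ext)
    fix k
    have "(\<Sum>i\<in>V. p i * X i k) = (\<Sum>j\<le>k. ((-(t/2))^j / fact j) * ((-(t/2))^(k-j) / fact (k-j)) * ip ((Lp^^j) u) ((Lp^^(k-j)) u))"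
    proof -
      have "(\<Sum>i\<in>V. p i * X i k) = (\<Sum>i\<in>V. \<Sum>j\<le>k. ((-(t/2))^j / fact j) * ((-(t/2))^(k-j) / fact (k-j)) * (p i * (Lp^^j) u i * (Lp^^(k-j)) u i))"
        unfolding X_def a_def by (intro sum.cong refl) (simp add: sum_distrib_left mult_ac)
      also have "\<dots> = (\<Sum>j\<le>k. \<Sum>i\<in>V. ((-(t/2))^j / fact j) * ((-(t/2))^(k-j) / fact (k-j)) * (p i * (Lp^^j) u i * (Lp^^(k-j)) u i))"
        by (rule sum.swap)
      also have "\<dots> = (\<Sum>j\<le>k. ((-(t/2))^j / fact j) * ((-(t/2))^(k-j) / fact (k-j)) * ip ((Lp^^j) u) ((Lp^^(k-j)) u))"
        unfolding ip_def by (simp only: sum_distrib_left)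
      finally show ?thesis .
    qed
    also have "\<dots> = (\<Sum>j\<le>k. ((-(t/2))^j / fact j) * ((-(t/2))^(k-j) / fact (k-j)) * ip ((Lp^^k) u) u)"
    proof (intro sum.cong refl)
      fix j assume "j \<in> {..k}"
      hence "j + (k - j) = k" by simp
      thus "((-(t/2))^j / fact j) * ((-(t/2))^(k-j) / fact (k-j)) * ip ((Lp^^j) u) ((Lp^^(k-j)) u) = ((-(t/2))^j / fact j) * ((-(t/2))^(k-j) / fact (k-j)) * ip ((Lp^^k) u) u"
        by (simp only: ip_pow)
    qed
    also have "\<dots> = (\<Sum>j\<le>k. ((-(t/2))^j / fact j) * ((-(t/2))^(k-j) / fact (k-j))) * ip ((Lp^^k) u) u"
      by (rule sum_distrib_right[symmetric])
    also have "\<dots> = (-t)^k / fact k * ip ((Lp^^k) u) u"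
      by (simp only: coef_prod)
    finally show "(\<Sum>i\<in>V. p i * X i k) = (-t)^k / fact k * ip ((Lp^^k) u) u" .
  qed
  also have "\<dots> = ip (hh t u) u" by (rule heat_ip[symmetric])
  finally show ?thesis .
qed


definition chi :: "nat set \<Rightarrow> nat \<Rightarrow> real" where "chi S = (\<lambda>i. if i \<in> S then 1 else 0)"
definition J where "J t S = ip (\<lambda>i. 1 - chi S i) (hh t (chi S))"

lemma heat_mass: "(\<Sum>i\<in>V. p i * hh t u i) = (\<Sum>i\<in>V. p i * u i)"
proof -
  have "ip (hh t (\<lambda>_. 1)) u = ip (hh t u) (\<lambda>_. 1)" by (rule heat_sym)
  thus ?thesis unfolding ip_def heat_one by simp
qed

lemma step_dec: assumes S: "S \<subseteq> V" and S': "S' = okmbo_step n w r \<gamma> t S"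
  shows "J t S' \<le> J t S" and "J t S' = J t S \<Longrightarrow> S \<subseteq> S'"
proof -
  define u where "u = chi S"
  define v where "v = chi S'"
  define x where "x = hh t u"
  define y where "y = hh t v"
  have S'eq: "S' = {i\<in>V. x i \<ge> 1/2}" unfolding S' okmbo_step_def x_def u_def chi_def ..
  have vx: "i\<in>V \<Longrightarrow> v i = (if x i \<ge> 1/2 then 1 else 0)" for i by (simp add: v_def chi_def S'eq)
  have uS: "u i = (if i \<in> S then 1 else 0)" for i by (simp add: u_def chi_def)
  have F1u: "(\<Sum>i\<in>V. p i * x i) = (\<Sum>i\<in>V. p i * u i)" unfolding x_def by (rule heat_mass)
  have F1v: "(\<Sum>i\<in>V. p i * y i) = (\<Sum>i\<in>V. p i * v i)" unfolding y_def by (rule heat_mass)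
  have F2: "(\<Sum>i\<in>V. p i * x i * v i) = (\<Sum>i\<in>V. p i * y i * u i)"
    using heat_sym[of t u v] unfolding ip_def x_def y_def .
  define z where "z = (\<lambda>i. v i - u i)"
  have F3: "hh t z i = y i - x i" if "i\<in>V" for i
    using linD[OF lin_heat, of z 1 v "-1" u i] that unfolding y_def x_def z_def by simp
  define Q where "Q = (\<Sum>i\<in>V. p i * (y i - x i) * (v i - u i))"
  have Q: "Q \<ge> 0"
  proof -
    have "Q = ip (hh t z) z" unfolding Q_def ip_def using F3 by (intro sum.cong refl) (simp add: z_def)
    thus ?thesis using heat_psd by simp
  qed
  define T where "T = (\<Sum>i\<in>V. p i * (u i - v i) * (1 - 2 * x i))"
  have Tn: "0 \<le> p i * (u i - v i) * (1 - 2 * x i)" if i: "i\<in>V" for i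
  proof -
    have "0 \<le> (u i - v i) * (1 - 2 * x i)" using vx[OF i] by (auto simp: uS)
    thus ?thesis using ppos[OF i] by (simp add: mult.assoc)
  qed
  have key: "p i * (1 - u i) * x i - p i * (1 - v i) * y i - p i * (y i - x i) * (v i - u i) - p i * (u i - v i) * (1 - 2 * x i)
     = (p i * x i - p i * u i) - (p i * y i - p i * v i) - (p i * x i * v i - p i * y i * u i)" for i
    by (simp add: algebra_simps)
  have "J t S - J t S' - Q - T = (\<Sum>i\<in>V. p i * (1 - u i) * x i - p i * (1 - v i) * y i - p i * (y i - x i) * (v i - u i) - p i * (u i - v i) * (1 - 2 * x i))"
    unfolding J_def ip_def Q_def T_def x_def y_def u_def v_def by (simp only: sum_subtractf)
  also have "\<dots> = (\<Sum>i\<in>V. (p i * x i - p i * u i) - (p i * y i - p i * v i) - (p i * x i * v i - p i * y i * u i))"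
    by (rule sum.cong[OF refl key])
  also have "\<dots> = ((\<Sum>i\<in>V. p i * x i) - (\<Sum>i\<in>V. p i * u i)) - ((\<Sum>i\<in>V. p i * y i) - (\<Sum>i\<in>V. p i * v i)) - ((\<Sum>i\<in>V. p i * x i * v i) - (\<Sum>i\<in>V. p i * y i * u i))"
    by (simp only: sum_subtractf)
  also have "\<dots> = 0" using F1u F1v F2 by simp
  finally have id: "J t S - J t S' = Q + T" by simp
  have T0: "T \<ge> 0" unfolding T_def using Tn by (intro sum_nonneg) auto
  show "J t S' \<le> J t S" using id Q T0 by simp
  assume eq: "J t S' = J t S"
  hence "T = 0" using id Q T0 by simp
  hence all0: "\<forall>i\<in>V. p i * (u i - v i) * (1 - 2 * x i) = 0"
    unfolding T_def using Tn by (subst (asm) sum_nonneg_eq_0_iff) auto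
  show "S \<subseteq> S'"
  proof
    fix i assume iS: "i \<in> S"
    hence i: "i\<in>V" using S by auto
    show "i \<in> S'"
    proof (rule ccontr)
      assume "i \<notin> S'"
      hence "x i < 1/2" using S'eq i by auto
      hence "v i = 0" using vx[OF i] by simp
      have "0 < p i * (u i - v i) * (1 - 2 * x i)"
        using ppos[OF i] \<open>x i < 1/2\<close> \<open>v i = 0\<close> iS by (simp add: uS)
      moreover have "p i * (u i - v i) * (1 - 2 * x i) = 0" using all0 i by blast
      ultimately show False by simp
    qed
  qed
qed

lemma okmbo_sub: "okmbo_step n w r \<gamma> t S \<subseteq> V" unfolding okmbo_step_def by auto

end

theorem corollary5p7:
  fixes n :: nat and w :: "nat \<Rightarrow> nat \<Rightarrow> real" and r \<gamma> \<tau> :: real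
    and S :: "nat \<Rightarrow> nat set" and N :: enat
  assumes "wgraph n w"
    and "0 \<le> r" and "r \<le> 1"
    and "\<gamma> \<ge> 0" and "\<tau> > 0"
    and "S 0 \<subseteq> {1..n}"
    and "\<forall>k. 1 \<le> k \<and> enat k \<le> N \<longrightarrow> S k = okmbo_step n w r \<gamma> \<tau> (S (k - 1))"
  shows "\<exists>K. enat K \<le> N \<and> (\<forall>k. K \<le> k \<and> enat k \<le> N \<longrightarrow> S k = S K)"
proof (cases N)
  case (enat M)
  show ?thesis by (rule exI[of _ M]) (auto simp: enat)
next
  case infinity
  interpret grph n w r \<gamma> by unfold_locales (rule assms(1))
  have stp: "S (Suc k) = okmbo_step n w r \<gamma> \<tau> (S k)" for k
  proof -
    have "1 \<le> Suc k \<and> enat (Suc k) \<le> N" using infinity by simp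
    hence "S (Suc k) = okmbo_step n w r \<gamma> \<tau> (S (Suc k - 1))" using assms(7) by blast
    thus ?thesis by simp
  qed
  have sub: "S k \<subseteq> V" for k
  proof (cases k)
    case 0 thus ?thesis using assms(6) by simp
  next
    case (Suc j) thus ?thesis using stp[of j] okmbo_sub by simp
  qed
  have dec: "J \<tau> (S (Suc k)) \<le> J \<tau> (S k)" for k using step_dec(1)[OF sub stp] .
  have deq: "J \<tau> (S (Suc k)) = J \<tau> (S k) \<Longrightarrow> S k \<subseteq> S (Suc k)" for k using step_dec(2)[OF sub stp] .
  have mono: "J \<tau> (S k) \<le> J \<tau> (S j)" if "j \<le> k" for j k
    using that
  proof (induction k rule: dec_induct)
    case base thus ?case by simp
  next
    case (step k) thus ?case using dec[of k] by linarith
  qed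
  obtain a b where ab: "a < b" "S a = S b"
  proof -
    have "\<not> inj_on S {..2^n}"
    proof
      assume inj: "inj_on S {..2^n}"
      have "card {..(2::nat)^n} \<le> card (Pow V)"
        by (rule card_inj_on_le[OF inj]) (use sub in auto)
      thus False by (simp add: card_Pow)
    qed
    then obtain a b where "a \<noteq> b" "S a = S b" unfolding inj_on_def by blast
    thus ?thesis using that by (cases "a < b") (auto simp: not_less_iff_gr_or_eq)
  qed
  have flat: "S k \<subseteq> S (Suc k)" if "a \<le> k" "k < b" for k
  proof (rule deq)
    have "J \<tau> (S b) \<le> J \<tau> (S (Suc k))" using mono that by simp
    moreover have "J \<tau> (S k) \<le> J \<tau> (S a)" using mono that by simp
    ultimately show "J \<tau> (S (Suc k)) = J \<tau> (S k)" using dec[of k] ab(2) by simp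
  qed
  have chain: "S (Suc a) \<subseteq> S k" if "Suc a \<le> k" "k \<le> b" for k
    using that
  proof (induction k rule: dec_induct)
    case base thus ?case by simp
  next
    case (step k) thus ?case using flat[of k] by auto
  qed
  have fix1: "S (Suc a) = S a" using chain[of b] ab flat[of a] by auto
  have fixall: "S k = S a" if "a \<le> k" for k
    using that
  proof (induction k rule: dec_induct)
    case base thus ?case by simp
  next
    case (step k) thus ?case using stp[of k] stp[of a] fix1 by simp
  qed
  show ?thesis
  proof (intro exI[of _ a] conjI allI impI)
    show "enat a \<le> N" using infinity by simp
    fix k assume "a \<le> k \<and> enat k \<le> N"
    thus "S k = S a" using fixall by blast
  qed
qed

end
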